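(* Let $M=4Z+3$ with $Z\ge1$ an integer, and let $\gamma\neq0$ and $J$ be real. Consider on the open chain of $M$ sites $$H=\sum_{m=1}^{M-1}\Big(J\, c_{m+1}^\dagger c_m\sigma_{m+1}^+ + \text{h.c.}\Big) - \sum_{m=1}^{M-1}\gamma\Big(c_{m+1}^\dagger c_m + \text{h.c.}\Big).$$ Then the subspace of states with exactly one fermion and spin on site $1$ equal to $|\uparrow\rangle$ contains at least $2^{3Z+1}$ linearly independent states $|\Psi\rangle$ satisfying $H^2|\Psi\rangle=(2\gamma^2+J^2)|\Psi\rangle$, each of which generates a two-dimensional Krylov subspace $\mathrm{span}\{|\Psi\rangle, H|\Psi\rangle\}$ (so the Hamiltonian has at least $2^{3Z+1}$ two-dimensional Krylov subspaces in this sector).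
   Context: Each site carries one spinless fermion mode ($c_m,c_m^\dagger$, canonical anticommutation relations) and one spin-$1/2$ with basis $|\uparrow\rangle=|1\rangle$, $|\downarrow\rangle=|0\rangle$ ($\sigma^z|1\rangle=|1\rangle$); $\sigma_m^+=|1\rangle\langle 0|$ acting on spin $m$ and $\sigma_m^-=(\sigma_m^+)^\dagger$. The Krylov subspace generated by $|\Psi\rangle$ is the span of $\{H^n|\Psi\rangle: n\ge 0\}$. *)

theory Defs
  imports Complex_Main
begin

text \<open>Each site carries one
spinless fermion mode and one spin-1/2. A basis configuration is a pair (F, S):
F = set of occupied fermion sites, S = set of sites whose spin is up (|1>).
A state is a complex coefficient function on configurations (supported on the
valid configurations for M sites). Fermion operators use the standard
Jordan-Wigner ordering by site index.\<close>

type_synonym config = "nat set \<times> nat set"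
type_synonym state = "config \<Rightarrow> complex"

definition configs :: "nat \<Rightarrow> config set" where
  "configs M = Pow {1..M} \<times> Pow {1..M}"

definition lift :: "nat \<Rightarrow> (config \<Rightarrow> (complex \<times> config) option) \<Rightarrow> state \<Rightarrow> state" where
  "lift M f \<psi> = (\<lambda>b'. \<Sum>b\<in>configs M. (case f b of None \<Rightarrow> 0
       | Some (a, b'') \<Rightarrow> (if b'' = b' then a * \<psi> b else 0)))"

definition jw_sign :: "nat set \<Rightarrow> nat \<Rightarrow> complex" where
  "jw_sign F m = (-1) ^ card {k\<in>F. k < m}"

definition ann_b :: "nat \<Rightarrow> config \<Rightarrow> (complex \<times> config) option" where
  "ann_b m b = (case b of (F, S) \<Rightarrow>
     if m \<in> F then Some (jw_sign F m, (F - {m}, S)) else None)"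

definition cre_b :: "nat \<Rightarrow> config \<Rightarrow> (complex \<times> config) option" where
  "cre_b m b = (case b of (F, S) \<Rightarrow>
     if m \<notin> F then Some (jw_sign F m, (insert m F, S)) else None)"

definition sp_b :: "nat \<Rightarrow> config \<Rightarrow> (complex \<times> config) option" where
  "sp_b m b = (case b of (F, S) \<Rightarrow>
     if m \<notin> S then Some (1, (F, insert m S)) else None)"

definition sm_b :: "nat \<Rightarrow> config \<Rightarrow> (complex \<times> config) option" where
  "sm_b m b = (case b of (F, S) \<Rightarrow>
     if m \<in> S then Some (1, (F, S - {m})) else None)"

definition ann :: "nat \<Rightarrow> nat \<Rightarrow> state \<Rightarrow> state" where "ann M m = lift M (ann_b m)"
definition cre :: "nat \<Rightarrow> nat \<Rightarrow> state \<Rightarrow> state" where "cre M m = lift M (cre_b m)"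
definition sigp :: "nat \<Rightarrow> nat \<Rightarrow> state \<Rightarrow> state" where "sigp M m = lift M (sp_b m)"
definition sigm :: "nat \<Rightarrow> nat \<Rightarrow> state \<Rightarrow> state" where "sigm M m = lift M (sm_b m)"

definition Ham :: "nat \<Rightarrow> real \<Rightarrow> real \<Rightarrow> state \<Rightarrow> state" where
  "Ham M J \<gamma> \<psi> = (\<lambda>b. \<Sum>m\<in>{1..M-1}.
      of_real J * (cre M (m+1) (ann M m (sigp M (m+1) \<psi>)) b)
    + of_real J * (sigm M (m+1) (cre M m (ann M (m+1) \<psi>)) b)
    - of_real \<gamma> * (cre M (m+1) (ann M m \<psi>) b + cre M m (ann M (m+1) \<psi>) b))"

definition cspan :: "state set \<Rightarrow> state set" where
  "cspan A = {\<phi>. \<exists>B c. finite B \<and> B \<subseteq> A \<and> \<phi> = (\<lambda>b. \<Sum>v\<in>B. c v * v b)}"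

definition lin_indep :: "state set \<Rightarrow> bool" where
  "lin_indep A = (\<forall>B c. finite B \<and> B \<subseteq> A \<and> (\<lambda>b. \<Sum>v\<in>B. c v * v b) = (\<lambda>_. 0)
       \<longrightarrow> (\<forall>v\<in>B. c v = 0))"

definition krylov :: "(state \<Rightarrow> state) \<Rightarrow> state \<Rightarrow> state set" where
  "krylov H \<psi> = cspan (range (\<lambda>n. (H ^^ n) \<psi>))"

definition sector :: "nat \<Rightarrow> state set" where
  "sector M = {\<psi>. \<forall>F S. \<psi> (F, S) \<noteq> 0 \<longrightarrow> (F, S) \<in> configs M \<and> card F = 1 \<and> 1 \<in> S}"

end

theory Submission
  imports Defs
begin


lemma finite_configs[simp]: "finite (configs M)" by (simp add: configs_def)

lemma lift_smult: "lift M f (\<lambda>b. c * \<psi> b) = (\<lambda>b'. c * lift M f \<psi> b')"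
  by (auto simp: lift_def sum_distrib_left intro!: sum.cong split: option.split)

lemma ann_eq: "ann M m \<psi> (F,S) = (if m \<notin> F \<and> (insert m F, S) \<in> configs M
   then jw_sign (insert m F) m * \<psi> (insert m F, S) else 0)"
proof -
  have e: "(case ann_b m b of None \<Rightarrow> 0 | Some (a, b'') \<Rightarrow> (if b'' = (F,S) then a * \<psi> b else 0))
     = (if b = (insert m F, S) then (if m \<notin> F then jw_sign (insert m F) m * \<psi> (insert m F, S) else 0) else 0)" for b
  proof (cases b)
    case (Pair F0 S0)
    show ?thesis
    proof (cases "m \<in> F0")
      case True
      have "(F0 - {m} = F \<and> S0 = S) = (m \<notin> F \<and> F0 = insert m F \<and> S0 = S)" using True by blast
      then show ?thesis using True Pair by (auto simp: ann_b_def)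
    next
      case False
      then show ?thesis using Pair by (auto simp: ann_b_def)
    qed
  qed
  show ?thesis unfolding ann_def lift_def e by (simp add: sum.delta)
qed

lemma cre_eq: "cre M m \<psi> (F,S) = (if m \<in> F \<and> (F - {m}, S) \<in> configs M
   then jw_sign (F - {m}) m * \<psi> (F - {m}, S) else 0)"
proof -
  have e: "(case cre_b m b of None \<Rightarrow> 0 | Some (a, b'') \<Rightarrow> (if b'' = (F,S) then a * \<psi> b else 0))
     = (if b = (F - {m}, S) then (if m \<in> F then jw_sign (F - {m}) m * \<psi> (F - {m}, S) else 0) else 0)" for b
  proof (cases b)
    case (Pair F0 S0)
    show ?thesis
    proof (cases "m \<in> F0")
      case False
      have "(insert m F0 = F \<and> S0 = S) = (m \<in> F \<and> F0 = F - {m} \<and> S0 = S)" using False by blast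
      then show ?thesis using False Pair by (auto simp: cre_b_def)
    next
      case True
      then show ?thesis using Pair by (auto simp: cre_b_def)
    qed
  qed
  show ?thesis unfolding cre_def lift_def e by (simp add: sum.delta)
qed

lemma sigp_eq: "sigp M m \<psi> (F,S) = (if m \<in> S \<and> (F, S - {m}) \<in> configs M
   then \<psi> (F, S - {m}) else 0)"
proof -
  have e: "(case sp_b m b of None \<Rightarrow> 0 | Some (a, b'') \<Rightarrow> (if b'' = (F,S) then a * \<psi> b else 0))
     = (if b = (F, S - {m}) then (if m \<in> S then \<psi> (F, S - {m}) else 0) else 0)" for b
  proof (cases b)
    case (Pair F0 S0)
    show ?thesis
    proof (cases "m \<in> S0")
      case False
      have "(F0 = F \<and> insert m S0 = S) = (m \<in> S \<and> F0 = F \<and> S0 = S - {m})" using False by blast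
      then show ?thesis using False Pair by (auto simp: sp_b_def)
    next
      case True
      then show ?thesis using Pair by (auto simp: sp_b_def)
    qed
  qed
  show ?thesis unfolding sigp_def lift_def e by (simp add: sum.delta)
qed

lemma sigm_eq: "sigm M m \<psi> (F,S) = (if m \<notin> S \<and> (F, insert m S) \<in> configs M
   then \<psi> (F, insert m S) else 0)"
proof -
  have e: "(case sm_b m b of None \<Rightarrow> 0 | Some (a, b'') \<Rightarrow> (if b'' = (F,S) then a * \<psi> b else 0))
     = (if b = (F, insert m S) then (if m \<notin> S then \<psi> (F, insert m S) else 0) else 0)" for b
  proof (cases b)
    case (Pair F0 S0)
    show ?thesis
    proof (cases "m \<in> S0")
      case True
      have "(F0 = F \<and> S0 - {m} = S) = (m \<notin> S \<and> F0 = F \<and> S0 = insert m S)" using True by blast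
      then show ?thesis using True Pair by (auto simp: sm_b_def)
    next
      case False
      then show ?thesis using Pair by (auto simp: sm_b_def)
    qed
  qed
  show ?thesis unfolding sigm_def lift_def e by (simp add: sum.delta)
qed



definition st :: "(nat \<Rightarrow> nat set \<Rightarrow> complex) \<Rightarrow> state" where
  "st \<Phi> = (\<lambda>(F,S). if \<exists>q. F = {q} then \<Phi> (the_elem F) S else 0)"

definition Bop :: "real \<Rightarrow> real \<Rightarrow> nat \<Rightarrow> (nat set \<Rightarrow> complex) \<Rightarrow> nat set \<Rightarrow> complex" where
  "Bop J \<gamma> j \<chi> S = - of_real \<gamma> * \<chi> S + (if j \<in> S then of_real J * \<chi> (S - {j}) else 0)"

definition Btop :: "real \<Rightarrow> real \<Rightarrow> nat \<Rightarrow> (nat set \<Rightarrow> complex) \<Rightarrow> nat set \<Rightarrow> complex" where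
  "Btop J \<gamma> j \<chi> S = - of_real \<gamma> * \<chi> S + (if j \<notin> S then of_real J * \<chi> (insert j S) else 0)"

definition hopP :: "nat \<Rightarrow> real \<Rightarrow> real \<Rightarrow> (nat \<Rightarrow> nat set \<Rightarrow> complex) \<Rightarrow> nat \<Rightarrow> nat set \<Rightarrow> complex" where
  "hopP M J \<gamma> \<Phi> q = (\<lambda>S. if 1 \<le> q \<and> q \<le> M then
      (if 2 \<le> q then Bop J \<gamma> q (\<Phi> (q-1)) S else 0)
    + (if q + 1 \<le> M then Btop J \<gamma> (q+1) (\<Phi> (q+1)) S else 0) else 0)"

definition okP :: "nat \<Rightarrow> (nat \<Rightarrow> nat set \<Rightarrow> complex) \<Rightarrow> bool" where
  "okP M \<Phi> = (\<forall>q S. \<Phi> q S \<noteq> 0 \<longrightarrow> 1 \<le> q \<and> q \<le> M \<and> S \<subseteq> {1..M})"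

lemma st_single[simp]: "st \<Phi> ({q}, S) = \<Phi> q S"
  by (simp add: st_def)

lemma st_nonsingle: "\<not>(\<exists>q. F = {q}) \<Longrightarrow> st \<Phi> (F, S) = 0"
  by (simp add: st_def)

lemma insert_single_iff: "m \<notin> X \<Longrightarrow> (\<exists>q. insert m X = {q}) \<longleftrightarrow> X = {}"
  by auto

lemma configs_iff: "((F,S) \<in> configs M) = (F \<subseteq> {1..M} \<and> S \<subseteq> {1..M})"
  by (auto simp: configs_def)

lemma jw_empty[simp]: "jw_sign {} m = 1" by (simp add: jw_sign_def)
lemma jw_self[simp]: "jw_sign {m} m = 1"
proof -
  have "{k\<in>{m}. k < m} = {}" by auto
  then show ?thesis unfolding jw_sign_def by (simp only: card.empty power_0)
qed

lemma T1: assumes ok: "okP M \<Phi>" and m: "1 \<le> m" "m + 1 \<le> M"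
  shows "cre M (m+1) (ann M m (sigp M (m+1) (st \<Phi>))) (F,S)
     = (if F = {m+1} then (if m+1 \<in> S then \<Phi> m (S - {m+1}) else 0) else 0)"
proof (cases "F = {m+1}")
  case True
  have "\<Phi> m (S - {m+1}) = 0" if "\<not> S \<subseteq> {1..M}" "m+1 \<in> S"
  proof -
    have "\<not> S - {m+1} \<subseteq> {1..M}" using that m by auto
    thus ?thesis using ok unfolding okP_def by blast
  qed
  then show ?thesis using True m
    by (auto simp: cre_eq ann_eq sigp_eq configs_iff)
next
  case False
  have "st \<Phi> (insert m (F - {m+1}), S - {m+1}) = 0" if "m+1 \<in> F" "m \<notin> F - {m+1}"
  proof -
    have "F - {m+1} \<noteq> {}" using False that by auto
    then have "\<not>(\<exists>q. insert m (F - {m+1}) = {q})" using that insert_single_iff by metis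
    thus ?thesis by (rule st_nonsingle)
  qed
  then show ?thesis using False by (auto simp: cre_eq ann_eq sigp_eq)
qed

lemma T2: assumes ok: "okP M \<Phi>" and m: "1 \<le> m" "m + 1 \<le> M"
  shows "sigm M (m+1) (cre M m (ann M (m+1) (st \<Phi>))) (F,S)
     = (if F = {m} then (if m+1 \<notin> S then \<Phi> (m+1) (insert (m+1) S) else 0) else 0)"
proof (cases "F = {m}")
  case True
  have "\<Phi> (m+1) (insert (m+1) S) = 0" if "\<not> S \<subseteq> {1..M}"
  proof -
    have "\<not> insert (m+1) S \<subseteq> {1..M}" using that m by auto
    thus ?thesis using ok unfolding okP_def by blast
  qed
  then show ?thesis using True m
    by (auto simp: cre_eq ann_eq sigm_eq configs_iff)
next
  case False
  have "st \<Phi> (insert (m+1) (F - {m}), insert (m+1) S) = 0" if "m \<in> F" "m+1 \<notin> F - {m}"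
  proof -
    have "F - {m} \<noteq> {}" using False that by auto
    then have "\<not>(\<exists>q. insert (m+1) (F - {m}) = {q})" using that insert_single_iff by metis
    thus ?thesis by (rule st_nonsingle)
  qed
  then show ?thesis using False by (auto simp: cre_eq ann_eq sigm_eq)
qed

lemma T3: assumes ok: "okP M \<Phi>" and m: "1 \<le> m" "m + 1 \<le> M"
  shows "cre M (m+1) (ann M m (st \<Phi>)) (F,S) = (if F = {m+1} then \<Phi> m S else 0)"
proof (cases "F = {m+1}")
  case True
  have "\<Phi> m S = 0" if "\<not> S \<subseteq> {1..M}" using ok that unfolding okP_def by blast
  then show ?thesis using True m
    by (auto simp: cre_eq ann_eq configs_iff)
next
  case False
  have "st \<Phi> (insert m (F - {m+1}), S) = 0" if "m+1 \<in> F" "m \<notin> F - {m+1}"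
  proof -
    have "F - {m+1} \<noteq> {}" using False that by auto
    then have "\<not>(\<exists>q. insert m (F - {m+1}) = {q})" using that insert_single_iff by metis
    thus ?thesis by (rule st_nonsingle)
  qed
  then show ?thesis using False by (auto simp: cre_eq ann_eq)
qed

lemma T4: assumes ok: "okP M \<Phi>" and m: "1 \<le> m" "m + 1 \<le> M"
  shows "cre M m (ann M (m+1) (st \<Phi>)) (F,S) = (if F = {m} then \<Phi> (m+1) S else 0)"
proof (cases "F = {m}")
  case True
  have "\<Phi> (m+1) S = 0" if "\<not> S \<subseteq> {1..M}" using ok that unfolding okP_def by blast
  then show ?thesis using True m
    by (auto simp: cre_eq ann_eq configs_iff)
next
  case False
  have "st \<Phi> (insert (m+1) (F - {m}), S) = 0" if "m \<in> F" "m+1 \<notin> F - {m}"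
  proof -
    have "F - {m} \<noteq> {}" using False that by auto
    then have "\<not>(\<exists>q. insert (m+1) (F - {m}) = {q})" using that insert_single_iff by metis
    thus ?thesis by (rule st_nonsingle)
  qed
  then show ?thesis using False by (auto simp: cre_eq ann_eq)
qed



lemma Ham_st: assumes ok: "okP M \<Phi>"
  shows "Ham M J \<gamma> (st \<Phi>) = st (hopP M J \<gamma> \<Phi>)"
proof (rule ext, clarify)
  fix F S
  define A where "A m = of_real J * (if m+1 \<in> S then \<Phi> m (S - {m+1}) else 0) - of_real \<gamma> * \<Phi> m S" for m
  define B where "B m = of_real J * (if m+1 \<notin> S then \<Phi> (m+1) (insert (m+1) S) else 0) - of_real \<gamma> * \<Phi> (m+1) S" for m
  have "Ham M J \<gamma> (st \<Phi>) (F,S) = (\<Sum>m\<in>{1..M-1}. (if F = {m+1} then A m else 0) + (if F = {m} then B m else 0))"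
    unfolding Ham_def
  proof (intro sum.cong refl)
    fix m assume "m \<in> {1..M-1}"
    then have m: "1 \<le> m" "m + 1 \<le> M" by auto
    show "complex_of_real J * cre M (m + 1) (ann M m (sigp M (m + 1) (st \<Phi>))) (F, S) +
          complex_of_real J * sigm M (m + 1) (cre M m (ann M (m + 1) (st \<Phi>))) (F, S) -
          complex_of_real \<gamma> * (cre M (m + 1) (ann M m (st \<Phi>)) (F, S) + cre M m (ann M (m + 1) (st \<Phi>)) (F, S)) =
          (if F = {m + 1} then A m else 0) + (if F = {m} then B m else 0)"
      using T1[OF ok m] T2[OF ok m] T3[OF ok m] T4[OF ok m]
      by (auto simp: A_def B_def algebra_simps)
  qed
  also have "\<dots> = (\<Sum>m\<in>{1..M-1}. if F = {m+1} then A m else 0) + (\<Sum>m\<in>{1..M-1}. if F = {m} then B m else 0)"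
    by (rule sum.distrib)
  also have "\<dots> = st (hopP M J \<gamma> \<Phi>) (F, S)"
  proof (cases "\<exists>q. F = {q}")
    case True
    then obtain q where q: "F = {q}" by blast
    have s1: "(\<Sum>m\<in>{1..M-1}. if F = {m+1} then A m else 0) = (if 2 \<le> q \<and> q \<le> M then A (q-1) else 0)"
    proof -
      have "(\<Sum>m\<in>{1..M-1}. if F = {m+1} then A m else 0) = (\<Sum>m\<in>{1..M-1}. if 1 \<le> q \<and> m = q - 1 then A m else 0)"
        using q by (intro sum.cong refl) auto
      also have "\<dots> = (if 1 \<le> q then (\<Sum>m\<in>{1..M-1}. if m = q - 1 then A m else 0) else 0)"
        by auto
      also have "\<dots> = (if 2 \<le> q \<and> q \<le> M then A (q-1) else 0)"
        by (auto simp: sum.delta)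
      finally show ?thesis .
    qed
    have s2: "(\<Sum>m\<in>{1..M-1}. if F = {m} then B m else 0) = (if 1 \<le> q \<and> q + 1 \<le> M then B q else 0)"
    proof -
      have "(\<Sum>m\<in>{1..M-1}. if F = {m} then B m else 0) = (\<Sum>m\<in>{1..M-1}. if m = q then B m else 0)"
        using q by (intro sum.cong refl) auto
      also have "\<dots> = (if 1 \<le> q \<and> q + 1 \<le> M then B q else 0)"
        by (auto simp: sum.delta)
      finally show ?thesis .
    qed
    show ?thesis unfolding s1 s2 using q
      by (auto simp: hopP_def A_def B_def Bop_def Btop_def algebra_simps)
  next
    case False
    have "(if F = {m+1} then A m else 0) = 0" "(if F = {m} then B m else 0) = 0" for m
      using False by auto
    then show ?thesis using False by (simp add: st_nonsingle)
  qed
  finally show "Ham M J \<gamma> (st \<Phi>) (F,S) = st (hopP M J \<gamma> \<Phi>) (F, S)" .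
qed

lemma okP_hop: "okP M \<Phi> \<Longrightarrow> okP M (hopP M J \<gamma> \<Phi>)"
  unfolding okP_def
proof (intro allI impI)
  fix q S assume ok: "\<forall>q S. \<Phi> q S \<noteq> 0 \<longrightarrow> 1 \<le> q \<and> q \<le> M \<and> S \<subseteq> {1..M}"
    and nz: "hopP M J \<gamma> \<Phi> q S \<noteq> 0"
  have q: "1 \<le> q \<and> q \<le> M" using nz by (auto simp: hopP_def split: if_splits)
  moreover have "S \<subseteq> {1..M}"
  proof (rule ccontr)
    assume nS: "\<not> S \<subseteq> {1..M}"
    have a: "\<not> S - {q} \<subseteq> {1..M}" "\<not> insert (q+1) S \<subseteq> {1..M}" using nS q by auto
    have "\<Phi> x S = 0" for x using ok nS by blast
    moreover have "\<Phi> x (S - {q}) = 0" for x using ok a by blast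
    moreover have "\<Phi> x (insert (q+1) S) = 0" for x using ok a by blast
    ultimately have "hopP M J \<gamma> \<Phi> q S = 0" by (simp add: hopP_def Bop_def Btop_def)
    thus False using nz by simp
  qed
  ultimately show "1 \<le> q \<and> q \<le> M \<and> S \<subseteq> {1..M}" by blast
qed

lemma Ham_smult: "Ham M J \<gamma> (\<lambda>b. c * \<psi> b) = (\<lambda>b. c * Ham M J \<gamma> \<psi> b)"
  by (simp add: Ham_def ann_def cre_def sigp_def sigm_def lift_smult sum_distrib_left algebra_simps)



definition prodst :: "nat \<Rightarrow> (nat \<Rightarrow> bool \<Rightarrow> bool \<Rightarrow> complex) \<Rightarrow> nat set \<Rightarrow> complex" where
  "prodst N g S = (if 1 \<in> S \<and> S \<subseteq> {1..2*N+1} then (\<Prod>i<N. g i (2*i+2 \<in> S) (2*i+3 \<in> S)) else 0)"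

definition fb1 :: "real \<Rightarrow> real \<Rightarrow> (bool \<Rightarrow> bool \<Rightarrow> complex) \<Rightarrow> bool \<Rightarrow> bool \<Rightarrow> complex" where
  "fb1 J \<gamma> f x y = - of_real \<gamma> * f x y + (if x then of_real J * f False y else 0)"
definition fb2 :: "real \<Rightarrow> real \<Rightarrow> (bool \<Rightarrow> bool \<Rightarrow> complex) \<Rightarrow> bool \<Rightarrow> bool \<Rightarrow> complex" where
  "fb2 J \<gamma> f x y = - of_real \<gamma> * f x y + (if y then of_real J * f x False else 0)"
definition fbt1 :: "real \<Rightarrow> real \<Rightarrow> (bool \<Rightarrow> bool \<Rightarrow> complex) \<Rightarrow> bool \<Rightarrow> bool \<Rightarrow> complex" where
  "fbt1 J \<gamma> f x y = - of_real \<gamma> * f x y + (if \<not> x then of_real J * f True y else 0)"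
definition fbt2 :: "real \<Rightarrow> real \<Rightarrow> (bool \<Rightarrow> bool \<Rightarrow> complex) \<Rightarrow> bool \<Rightarrow> bool \<Rightarrow> complex" where
  "fbt2 J \<gamma> f x y = - of_real \<gamma> * f x y + (if \<not> y then of_real J * f x True else 0)"

lemma prod_upd:
  fixes N i :: nat
  assumes "i < N"
  shows "(\<Prod>i'<N. (g(i := h)) i' (x i') (y i')) = h (x i) (y i) * (\<Prod>i'\<in>{..<N}-{i}. g i' (x i') (y i'))"
proof -
  have "(\<Prod>i'<N. (g(i := h)) i' (x i') (y i')) = (g(i := h)) i (x i) (y i) * (\<Prod>i'\<in>{..<N}-{i}. (g(i := h)) i' (x i') (y i'))"
    using assms by (intro prod.remove) auto
  also have "(\<Prod>i'\<in>{..<N}-{i}. (g(i := h)) i' (x i') (y i')) = (\<Prod>i'\<in>{..<N}-{i}. g i' (x i') (y i'))"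
    by (intro prod.cong) auto
  finally show ?thesis by simp
qed

lemma prod_rest_cong:
  fixes N i :: nat
  assumes "\<And>i'. i' < N \<Longrightarrow> i' \<noteq> i \<Longrightarrow> x i' = x' i' \<and> y i' = y' i'"
  shows "(\<Prod>i'\<in>{..<N}-{i}. g i' (x i') (y i')) = (\<Prod>i'\<in>{..<N}-{i}. g i' (x' i') (y' i'))"
  using assms by (intro prod.cong) auto

lemma guard_minus: "(j::nat) \<noteq> 1 \<Longrightarrow> 1 \<le> j \<Longrightarrow> j \<le> 2*N+1 \<Longrightarrow>
   (1 \<in> S - {j} \<and> S - {j} \<subseteq> {1..2*N+1}) = (1 \<in> S \<and> S \<subseteq> {1..2*N+1})"
  by auto
lemma guard_insert: "(j::nat) \<noteq> 1 \<Longrightarrow> 1 \<le> j \<Longrightarrow> j \<le> 2*N+1 \<Longrightarrow>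
   (1 \<in> insert j S \<and> insert j S \<subseteq> {1..2*N+1}) = (1 \<in> S \<and> S \<subseteq> {1..2*N+1})"
  by auto

lemma Bop_prod1: assumes i: "i < N"
  shows "Bop J \<gamma> (2*i+2) (prodst N g) = prodst N (g(i := fb1 J \<gamma> (g i)))"
proof
  fix S
  let ?R = "\<Prod>i'\<in>{..<N}-{i}. g i' (2*i'+2 \<in> S) (2*i'+3 \<in> S)"
  have R: "(\<Prod>i'\<in>{..<N}-{i}. g i' (2*i'+2 \<in> S - {2*i+2}) (2*i'+3 \<in> S - {2*i+2})) = ?R"
    by (rule prod_rest_cong) auto
  have P: "(\<Prod>i'<N. g i' (2*i'+2 \<in> T) (2*i'+3 \<in> T)) = g i (2*i+2 \<in> T) (2*i+3 \<in> T) * (\<Prod>i'\<in>{..<N}-{i}. g i' (2*i'+2 \<in> T) (2*i'+3 \<in> T))" for T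
    using prod_upd[OF i, of g "g i"] by simp
  show "Bop J \<gamma> (2*i+2) (prodst N g) S = prodst N (g(i := fb1 J \<gamma> (g i))) S"
    using i unfolding Bop_def prodst_def
    apply (simp only: prod_upd[OF i] guard_minus P R)
    apply (auto simp: fb1_def algebra_simps)
    done
qed

lemma Bop_prod2: assumes i: "i < N"
  shows "Bop J \<gamma> (2*i+3) (prodst N g) = prodst N (g(i := fb2 J \<gamma> (g i)))"
proof
  fix S
  let ?R = "\<Prod>i'\<in>{..<N}-{i}. g i' (2*i'+2 \<in> S) (2*i'+3 \<in> S)"
  have R: "(\<Prod>i'\<in>{..<N}-{i}. g i' (2*i'+2 \<in> S - {2*i+3}) (2*i'+3 \<in> S - {2*i+3})) = ?R"
    by (rule prod_rest_cong) auto
  have P: "(\<Prod>i'<N. g i' (2*i'+2 \<in> T) (2*i'+3 \<in> T)) = g i (2*i+2 \<in> T) (2*i+3 \<in> T) * (\<Prod>i'\<in>{..<N}-{i}. g i' (2*i'+2 \<in> T) (2*i'+3 \<in> T))" for T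
    using prod_upd[OF i, of g "g i"] by simp
  show "Bop J \<gamma> (2*i+3) (prodst N g) S = prodst N (g(i := fb2 J \<gamma> (g i))) S"
    using i unfolding Bop_def prodst_def
    apply (simp only: prod_upd[OF i] guard_minus P R)
    apply (auto simp: fb2_def algebra_simps)
    done
qed

lemma Btop_prod1: assumes i: "i < N"
  shows "Btop J \<gamma> (2*i+2) (prodst N g) = prodst N (g(i := fbt1 J \<gamma> (g i)))"
proof
  fix S
  let ?R = "\<Prod>i'\<in>{..<N}-{i}. g i' (2*i'+2 \<in> S) (2*i'+3 \<in> S)"
  have R: "(\<Prod>i'\<in>{..<N}-{i}. g i' (2*i'+2 \<in> insert (2*i+2) S) (2*i'+3 \<in> insert (2*i+2) S)) = ?R"
    by (rule prod_rest_cong) auto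
  have P: "(\<Prod>i'<N. g i' (2*i'+2 \<in> T) (2*i'+3 \<in> T)) = g i (2*i+2 \<in> T) (2*i+3 \<in> T) * (\<Prod>i'\<in>{..<N}-{i}. g i' (2*i'+2 \<in> T) (2*i'+3 \<in> T))" for T
    using prod_upd[OF i, of g "g i"] by simp
  show "Btop J \<gamma> (2*i+2) (prodst N g) S = prodst N (g(i := fbt1 J \<gamma> (g i))) S"
    using i unfolding Btop_def prodst_def
    apply (simp only: prod_upd[OF i] guard_insert P R)
    apply (auto simp: fbt1_def algebra_simps)
    done
qed

lemma Btop_prod2: assumes i: "i < N"
  shows "Btop J \<gamma> (2*i+3) (prodst N g) = prodst N (g(i := fbt2 J \<gamma> (g i)))"
proof
  fix S
  let ?R = "\<Prod>i'\<in>{..<N}-{i}. g i' (2*i'+2 \<in> S) (2*i'+3 \<in> S)"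
  have R: "(\<Prod>i'\<in>{..<N}-{i}. g i' (2*i'+2 \<in> insert (2*i+3) S) (2*i'+3 \<in> insert (2*i+3) S)) = ?R"
    by (rule prod_rest_cong) auto
  have P: "(\<Prod>i'<N. g i' (2*i'+2 \<in> T) (2*i'+3 \<in> T)) = g i (2*i+2 \<in> T) (2*i+3 \<in> T) * (\<Prod>i'\<in>{..<N}-{i}. g i' (2*i'+2 \<in> T) (2*i'+3 \<in> T))" for T
    using prod_upd[OF i, of g "g i"] by simp
  show "Btop J \<gamma> (2*i+3) (prodst N g) S = prodst N (g(i := fbt2 J \<gamma> (g i))) S"
    using i unfolding Btop_def prodst_def
    apply (simp only: prod_upd[OF i] guard_insert P R)
    apply (auto simp: fbt2_def algebra_simps)
    done
qed

lemma prodst_cong: "(\<And>i. i < N \<Longrightarrow> g i = h i) \<Longrightarrow> prodst N g = prodst N h"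
  unfolding prodst_def by (intro ext) (auto intro!: prod.cong)

lemma prodst_upd_same: "i < N \<Longrightarrow> prodst N (g(i := g i)) = prodst N g"
  by simp

lemma prod_split:
  fixes N i :: nat
  assumes "i < N"
  shows "(\<Prod>i'<N. g i' (x i') (y i')) = g i (x i) (y i) * (\<Prod>i'\<in>{..<N}-{i}. g i' (x i') (y i'))"
  using assms by (intro prod.remove) auto

lemma prodst_add: assumes i: "(i::nat) < N"
  shows "prodst N (g(i := h1)) S + prodst N (g(i := h2)) S = prodst N (g(i := (\<lambda>x y. h1 x y + h2 x y))) S"
  unfolding prodst_def by (simp only: prod_upd[OF i]) (simp add: algebra_simps)

lemma prodst_smult: assumes i: "(i::nat) < N"
  shows "c * prodst N g S = prodst N (g(i := (\<lambda>x y. c * g i x y))) S"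
proof -
  have P: "(\<Prod>i'<N. g i' (2*i'+2\<in>S) (2*i'+3\<in>S)) = g i (2*i+2\<in>S) (2*i+3\<in>S) * (\<Prod>i'\<in>{..<N}-{i}. g i' (2*i'+2\<in>S) (2*i'+3\<in>S))"
    by (rule prod_split[OF i])
  show ?thesis by (simp only: prodst_def prod_upd[OF i] P) (simp add: algebra_simps)
qed

lemma prodst_zero: assumes i: "(i::nat) < N"
  shows "prodst N (g(i := (\<lambda>x y. 0))) S = 0"
  unfolding prodst_def by (simp only: prod_upd[OF i]) simp

lemma prodst_pair_sum:
  assumes i0: "(i0::nat) < N" and agree: "\<And>i. i < N \<Longrightarrow> i \<noteq> i0 \<Longrightarrow> A i = B i"
    and z: "\<And>x y. A i0 x y + B i0 x y = 0"
  shows "prodst N A S + prodst N B S = 0"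
proof -
  have a: "prodst N A = prodst N (A(i0 := A i0))" by simp
  have b: "prodst N B = prodst N (A(i0 := B i0))"
    by (rule prodst_cong) (use agree in auto)
  have "prodst N A S + prodst N B S = prodst N (A(i0 := (\<lambda>x y. A i0 x y + B i0 x y))) S"
    unfolding a b by (rule prodst_add[OF i0])
  also have "\<dots> = 0" using z prodst_zero[OF i0] by simp
  finally show ?thesis .
qed

lemma Bop_zero[simp]: "Bop J \<gamma> j (\<lambda>_. 0) = (\<lambda>_. 0)" by (simp add: Bop_def fun_eq_iff)
lemma Btop_zero[simp]: "Btop J \<gamma> j (\<lambda>_. 0) = (\<lambda>_. 0)" by (simp add: Btop_def fun_eq_iff)



definition v1 :: "bool \<Rightarrow> bool \<Rightarrow> complex" where
  "v1 x y = (if x = y then (if x then -1 else 1) else 0)"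
definition v2 :: "real \<Rightarrow> real \<Rightarrow> bool \<Rightarrow> bool \<Rightarrow> complex" where
  "v2 J \<gamma> x y = (if x then (if y then 0 else - of_real \<gamma>) else (if y then of_real \<gamma> else - of_real J))"
definition beta :: "real \<Rightarrow> real \<Rightarrow> nat set \<Rightarrow> nat \<Rightarrow> bool \<Rightarrow> bool \<Rightarrow> complex" where
  "beta J \<gamma> T j = (if 4*j+2 \<in> T then v1 else v2 J \<gamma>)"
definition fR :: "nat set \<Rightarrow> nat \<Rightarrow> bool \<Rightarrow> bool \<Rightarrow> complex" where
  "fR T j x y = (if x = (4*j \<in> T) \<and> y = (4*j+1 \<in> T) then 1 else 0)"
definition fbt2inv :: "real \<Rightarrow> real \<Rightarrow> (bool \<Rightarrow> bool \<Rightarrow> complex) \<Rightarrow> bool \<Rightarrow> bool \<Rightarrow> complex" where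
  "fbt2inv J \<gamma> f x y = - (f x y + (if \<not> y then (of_real J / of_real \<gamma>) * f x True else 0)) / of_real \<gamma>"
definition fL :: "real \<Rightarrow> real \<Rightarrow> nat set \<Rightarrow> nat \<Rightarrow> bool \<Rightarrow> bool \<Rightarrow> complex" where
  "fL J \<gamma> T j x y = - fbt2inv J \<gamma> (fb1 J \<gamma> (fR T j)) x y"
definition gfac :: "real \<Rightarrow> real \<Rightarrow> nat set \<Rightarrow> nat \<Rightarrow> nat \<Rightarrow> bool \<Rightarrow> bool \<Rightarrow> complex" where
  "gfac J \<gamma> T k i = (if even i then
      (if i div 2 < k then fb2 J \<gamma> (beta J \<gamma> T (i div 2))
       else if i div 2 = k then beta J \<gamma> T (i div 2)
       else fbt1 J \<gamma> (beta J \<gamma> T (i div 2)))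
    else (if (i+1) div 2 \<le> k then fL J \<gamma> T ((i+1) div 2) else fR T ((i+1) div 2)))"

definition Phi :: "nat \<Rightarrow> real \<Rightarrow> real \<Rightarrow> nat set \<Rightarrow> nat \<Rightarrow> nat set \<Rightarrow> complex" where
  "Phi Z J \<gamma> T q = (if q mod 4 = 2 \<and> q \<le> 4*Z+3 then prodst (2*Z+1) (gfac J \<gamma> T (q div 4)) else (\<lambda>_. 0))"

lemma F1_v1: "fb1 J \<gamma> (fbt1 J \<gamma> v1) x y + fbt2 J \<gamma> (fb2 J \<gamma> v1) x y = of_real (2*\<gamma>^2 + J^2) * v1 x y"
  by (cases x; cases y) (simp_all add: fb1_def fb2_def fbt1_def fbt2_def v1_def power2_eq_square algebra_simps)

lemma F1_v2: "fb1 J \<gamma> (fbt1 J \<gamma> (v2 J \<gamma>)) x y + fbt2 J \<gamma> (fb2 J \<gamma> (v2 J \<gamma>)) x y = of_real (2*\<gamma>^2 + J^2) * v2 J \<gamma> x y"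
  by (cases x; cases y) (simp_all add: fb1_def fb2_def fbt1_def fbt2_def v2_def power2_eq_square algebra_simps)

lemma F1_beta: "fb1 J \<gamma> (fbt1 J \<gamma> (beta J \<gamma> T j)) x y + fbt2 J \<gamma> (fb2 J \<gamma> (beta J \<gamma> T j)) x y
   = of_real (2*\<gamma>^2 + J^2) * beta J \<gamma> T j x y"
  by (simp add: beta_def F1_v1 F1_v2)

lemma F2: assumes "\<gamma> \<noteq> 0" shows "fbt2 J \<gamma> (fbt2inv J \<gamma> h) x y = h x y"
  using assms by (cases y) (simp_all add: fbt2_def fbt2inv_def field_simps)

lemma F3: assumes "\<gamma> \<noteq> 0" shows "fb1 J \<gamma> (fR T j) x y + fbt2 J \<gamma> (fL J \<gamma> T j) x y = 0"
proof -
  have "fbt2 J \<gamma> (fL J \<gamma> T j) x y = - fbt2 J \<gamma> (fbt2inv J \<gamma> (fb1 J \<gamma> (fR T j))) x y"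
    unfolding fL_def fbt2_def by (simp add: algebra_simps)
  then show ?thesis using F2[OF assms] by simp
qed



lemma okPhi: "okP (4*Z+3) (Phi Z J \<gamma> T)"
  unfolding okP_def
proof (intro allI impI)
  fix q S assume nz: "Phi Z J \<gamma> T q S \<noteq> 0"
  have q: "q mod 4 = 2" "q \<le> 4*Z+3"
    using nz unfolding Phi_def by (cases "q mod 4 = 2 \<and> q \<le> 4*Z+3"; simp)+
  then have "1 \<le> q" by (cases q) auto
  moreover have "S \<subseteq> {1..4*Z+3}"
  proof (rule ccontr)
    assume a: "\<not> S \<subseteq> {1..4*Z+3}"
    have eq: "2*(2*Z+1)+1 = 4*Z+3" by simp
    have "Phi Z J \<gamma> T q S = 0" using q a unfolding Phi_def prodst_def eq by simp
    then show False using nz by simp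
  qed
  ultimately show "1 \<le> q \<and> q \<le> 4*Z+3 \<and> S \<subseteq> {1..4*Z+3}" using q by simp
qed


lemma m4s[simp]: "Suc (Suc (4*k)) mod 4 = 2" "Suc (Suc (4*k)) div 4 = k" "Suc (4*k) mod 4 = 1" "(4*k+3) mod 4 = 3"
  "(4*k) mod 4 = (0::nat)" "(4 + 4*k) mod 4 = 0" "Suc (Suc (Suc (4*k))) mod 4 = 3"
  by presburger+
lemma Phi_zero: "q mod 4 \<noteq> 2 \<Longrightarrow> Phi Z J \<gamma> T q = (\<lambda>_. 0)" by (simp add: Phi_def)
lemma Phi_2: "k \<le> Z \<Longrightarrow> Phi Z J \<gamma> T (4*k+2) = prodst (2*Z+1) (gfac J \<gamma> T k)"
  by (simp add: Phi_def)
lemma Phi_0: "Phi Z J \<gamma> T (4*k) = (\<lambda>_. 0)" by (simp add: Phi_def)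
lemma Phi_1: "Phi Z J \<gamma> T (4*k+1) = (\<lambda>_. 0)" by (simp add: Phi_def)
lemma Phi_3: "Phi Z J \<gamma> T (4*k+3) = (\<lambda>_. 0)" by (simp add: Phi_def)
lemma Phi_big: "Z < k \<Longrightarrow> Phi Z J \<gamma> T (4*k+2) = (\<lambda>_. 0)" by (simp add: Phi_def)

lemma hop1_1: "k \<le> Z \<Longrightarrow> hopP (4*Z+3) J \<gamma> (Phi Z J \<gamma> T) (4*k+1) = Btop J \<gamma> (4*k+2) (Phi Z J \<gamma> T (4*k+2))"
  unfolding hopP_def by (auto simp: Phi_zero fun_eq_iff)

lemma hop1_3: "k \<le> Z \<Longrightarrow> hopP (4*Z+3) J \<gamma> (Phi Z J \<gamma> T) (4*k+3) = Bop J \<gamma> (4*k+3) (Phi Z J \<gamma> T (4*k+2))"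
proof -
  assume k: "k \<le> Z"
  have e: "4*k+3+1 = 4*(k+1)" by simp
  show ?thesis unfolding hopP_def e using k by (auto simp: Phi_zero fun_eq_iff)
qed

lemma hop1_0: "hopP (4*Z+3) J \<gamma> (Phi Z J \<gamma> T) (4*k) = (\<lambda>_. 0)"
proof (cases k)
  case 0 then show ?thesis by (simp add: hopP_def fun_eq_iff)
next
  case (Suc k')
  have e: "4*k - 1 = 4*k'+3" "4*k+1 = 4*k+1" using Suc by simp_all
  show ?thesis unfolding hopP_def e(1) by (simp add: Phi_zero fun_eq_iff)
qed

lemma hop1_2: "hopP (4*Z+3) J \<gamma> (Phi Z J \<gamma> T) (4*k+2) = (\<lambda>_. 0)"
proof -
  have e: "4*k+2-1 = 4*k+1" "4*k+2+1 = 4*k+3" by simp_all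
  show ?thesis unfolding hopP_def e by (simp add: Phi_zero fun_eq_iff)
qed

lemma gfac_blk: "gfac J \<gamma> T k (2*k) = beta J \<gamma> T k" by (simp add: gfac_def)

lemma blk: assumes k: "k \<le> Z"
  shows "Bop J \<gamma> (4*k+2) (Btop J \<gamma> (4*k+2) (prodst (2*Z+1) (gfac J \<gamma> T k))) S
       + Btop J \<gamma> (4*k+3) (Bop J \<gamma> (4*k+3) (prodst (2*Z+1) (gfac J \<gamma> T k))) S
       = of_real (2*\<gamma>^2 + J^2) * prodst (2*Z+1) (gfac J \<gamma> T k) S"
proof -
  let ?g = "gfac J \<gamma> T k"
  let ?N = "2*Z+1"
  have i: "2*k < ?N" using k by simp
  have e1: "4*k+2 = 2*(2*k)+2" and e2: "4*k+3 = 2*(2*k)+3" by simp_all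
  have "Bop J \<gamma> (4*k+2) (Btop J \<gamma> (4*k+2) (prodst ?N ?g)) S
       + Btop J \<gamma> (4*k+3) (Bop J \<gamma> (4*k+3) (prodst ?N ?g)) S
     = prodst ?N (?g(2*k := fb1 J \<gamma> (fbt1 J \<gamma> (?g (2*k))))) S + prodst ?N (?g(2*k := fbt2 J \<gamma> (fb2 J \<gamma> (?g (2*k))))) S"
    unfolding e1 e2 by (simp only: Btop_prod1[OF i] Bop_prod1[OF i] Btop_prod2[OF i] Bop_prod2[OF i] fun_upd_upd fun_upd_same)
  also have "\<dots> = prodst ?N (?g(2*k := (\<lambda>x y. fb1 J \<gamma> (fbt1 J \<gamma> (?g (2*k))) x y + fbt2 J \<gamma> (fb2 J \<gamma> (?g (2*k))) x y))) S"
    by (rule prodst_add[OF i])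
  also have "(\<lambda>x y. fb1 J \<gamma> (fbt1 J \<gamma> (?g (2*k))) x y + fbt2 J \<gamma> (fb2 J \<gamma> (?g (2*k))) x y)
      = (\<lambda>x y. of_real (2*\<gamma>^2 + J^2) * ?g (2*k) x y)"
    unfolding gfac_blk by (intro ext) (rule F1_beta)
  also have "prodst ?N (?g(2*k := (\<lambda>x y. of_real (2*\<gamma>^2 + J^2) * ?g (2*k) x y))) S = of_real (2*\<gamma>^2 + J^2) * prodst ?N ?g S"
    by (rule prodst_smult[OF i, symmetric])
  finally show ?thesis .
qed

lemma gfac_agree: assumes "i \<noteq> 2*k'" "i \<noteq> 2*k'+1" "i \<noteq> 2*k'+2"
  shows "gfac J \<gamma> T k' i = gfac J \<gamma> T (k'+1) i"
proof (cases "even i")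
  case True
  then obtain j where j: "i = 2*j" by blast
  then have "j \<noteq> k'" "j \<noteq> k'+1" using assms by auto
  then show ?thesis using j by (auto simp: gfac_def)
next
  case False
  then obtain j where j: "i = 2*j+1" using oddE by blast
  then have "j \<noteq> k'" using assms by auto
  then show ?thesis using j False by (auto simp: gfac_def)
qed

lemma lnk: assumes k: "k'+1 \<le> Z" and g: "\<gamma> \<noteq> 0"
  shows "Bop J \<gamma> (4*k'+4) (Bop J \<gamma> (4*k'+3) (prodst (2*Z+1) (gfac J \<gamma> T k'))) S
       + Btop J \<gamma> (4*k'+5) (Btop J \<gamma> (4*k'+6) (prodst (2*Z+1) (gfac J \<gamma> T (k'+1)))) S = 0"
proof -
  let ?g0 = "gfac J \<gamma> T k'" and ?g1 = "gfac J \<gamma> T (k'+1)"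
  let ?N = "2*Z+1"
  have i1: "2*k' < ?N" and i0: "2*k'+1 < ?N" and i2: "2*k'+2 < ?N" using k by simp_all
  have e: "4*k'+3 = 2*(2*k')+3" "4*k'+4 = 2*(2*k'+1)+2" "4*k'+5 = 2*(2*k'+1)+3" "4*k'+6 = 2*(2*k'+2)+2"
    by simp_all
  have ne: "2*k'+1 \<noteq> 2*k'" "2*k'+1 \<noteq> 2*k'+2" by simp_all
  define A where "A = ?g0(2*k' := fb2 J \<gamma> (?g0 (2*k')), 2*k'+1 := fb1 J \<gamma> (?g0 (2*k'+1)))"
  define B where "B = ?g1(2*k'+2 := fbt1 J \<gamma> (?g1 (2*k'+2)), 2*k'+1 := fbt2 J \<gamma> (?g1 (2*k'+1)))"
  have LA: "Bop J \<gamma> (4*k'+4) (Bop J \<gamma> (4*k'+3) (prodst ?N ?g0)) = prodst ?N A"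
    unfolding e A_def by (simp only: Bop_prod2[OF i1] Bop_prod1[OF i0] fun_upd_other[OF ne(1)])
  have LB: "Btop J \<gamma> (4*k'+5) (Btop J \<gamma> (4*k'+6) (prodst ?N ?g1)) = prodst ?N B"
    unfolding e B_def by (simp only: Btop_prod1[OF i2] Btop_prod2[OF i0] fun_upd_other[OF ne(2)])
  have "prodst ?N A S + prodst ?N B S = 0"
  proof (rule prodst_pair_sum[OF i0])
    fix i assume "i < ?N" "i \<noteq> 2*k'+1"
    then show "A i = B i"
      unfolding A_def B_def
      by (cases "i = 2*k'"; cases "i = 2*k'+2") (auto simp: gfac_def intro: gfac_agree)
  next
    fix x y
    have a: "A (2*k'+1) = fb1 J \<gamma> (fR T (k'+1))" unfolding A_def by (simp add: gfac_def)
    have b: "B (2*k'+1) = fbt2 J \<gamma> (fL J \<gamma> T (k'+1))" unfolding B_def by (simp add: gfac_def)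
    show "A (2*k'+1) x y + B (2*k'+1) x y = 0" unfolding a b by (rule F3[OF g])
  qed
  then show ?thesis unfolding LA LB .
qed

lemma mod4_cases: obtains k where "(q::nat) = 4*k" | k where "q = 4*k+1" | k where "q = 4*k+2" | k where "q = 4*k+3"
proof -
  have d: "q = 4*(q div 4) + q mod 4" by simp
  have "q mod 4 = 0 \<or> q mod 4 = 1 \<or> q mod 4 = 2 \<or> q mod 4 = 3" by arith
  then show ?thesis
  proof (elim disjE)
    assume "q mod 4 = 0" then show ?thesis using that(1)[of "q div 4"] d by simp
  next
    assume "q mod 4 = 1" then show ?thesis using that(2)[of "q div 4"] d by simp
  next
    assume "q mod 4 = 2" then show ?thesis using that(3)[of "q div 4"] d by simp
  next
    assume "q mod 4 = 3" then show ?thesis using that(4)[of "q div 4"] d by simp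
  qed
qed

lemma hop_zero_nb: "\<Phi> (q-1) = (\<lambda>_. 0) \<Longrightarrow> \<Phi> (q+1) = (\<lambda>_. 0) \<Longrightarrow> hopP M J \<gamma> \<Phi> q S = 0"
  by (simp add: hopP_def)

lemma hop2: assumes g: "\<gamma> \<noteq> 0"
  shows "hopP (4*Z+3) J \<gamma> (hopP (4*Z+3) J \<gamma> (Phi Z J \<gamma> T)) q S = of_real (2*\<gamma>^2 + J^2) * Phi Z J \<gamma> T q S"
proof -
  define \<Psi> where "\<Psi> = hopP (4*Z+3) J \<gamma> (Phi Z J \<gamma> T)"
  define lam :: complex where "lam = of_real (2*\<gamma>^2 + J^2)"
  have z0: "\<Psi> (4*k) = (\<lambda>_. 0)" for k unfolding \<Psi>_def by (rule hop1_0)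
  have z2: "\<Psi> (4*k+2) = (\<lambda>_. 0)" for k unfolding \<Psi>_def by (rule hop1_2)
  have h1: "\<Psi> (4*k+1) = Btop J \<gamma> (4*k+2) (Phi Z J \<gamma> T (4*k+2))" if "k \<le> Z" for k
    unfolding \<Psi>_def using that by (rule hop1_1)
  have h3: "\<Psi> (4*k+3) = Bop J \<gamma> (4*k+3) (Phi Z J \<gamma> T (4*k+2))" if "k \<le> Z" for k
    unfolding \<Psi>_def using that by (rule hop1_3)
  have "hopP (4*Z+3) J \<gamma> \<Psi> q S = lam * Phi Z J \<gamma> T q S"
  proof (cases q rule: mod4_cases)
    case (1 k)
    show ?thesis
    proof (cases "k = 0 \<or> Z < k")
      case True
      then have nc: "(1 \<le> q \<and> q \<le> 4*Z+3) = False" using 1 by auto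
      have "hopP (4*Z+3) J \<gamma> \<Psi> q S = 0" by (simp only: hopP_def nc if_False)
      then show ?thesis using 1 by (simp add: Phi_zero)
    next
      case False
      then obtain k' where k': "k = k'+1" "k'+1 \<le> Z" by (cases k) auto
      have e: "q - 1 = 4*k'+3" "q + 1 = 4*(k'+1)+1" "q = 4*k'+4" using 1 k' by simp_all
      have c: "1 \<le> q" "q \<le> 4*Z+3" "2 \<le> q" "q+1 \<le> 4*Z+3" using 1 k' by simp_all
      have "hopP (4*Z+3) J \<gamma> \<Psi> q S = Bop J \<gamma> q (\<Psi> (q-1)) S + Btop J \<gamma> (q+1) (\<Psi> (q+1)) S"
        unfolding hopP_def using c by simp
      also have "\<dots> = Bop J \<gamma> (4*k'+4) (Bop J \<gamma> (4*k'+3) (prodst (2*Z+1) (gfac J \<gamma> T k'))) S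
          + Btop J \<gamma> (4*k'+5) (Btop J \<gamma> (4*k'+6) (prodst (2*Z+1) (gfac J \<gamma> T (k'+1)))) S"
      proof -
        have a: "\<Psi> (q-1) = Bop J \<gamma> (4*k'+3) (prodst (2*Z+1) (gfac J \<gamma> T k'))"
          using h3[of k'] Phi_2[of k' Z J \<gamma> T] k' e(1) by simp
        have b: "\<Psi> (q+1) = Btop J \<gamma> (4*k'+6) (prodst (2*Z+1) (gfac J \<gamma> T (k'+1)))"
        proof -
          have "\<Psi> (q+1) = Btop J \<gamma> (4*(k'+1)+2) (Phi Z J \<gamma> T (4*(k'+1)+2))"
            unfolding e(2) using k' by (intro h1) simp
          also have "\<dots> = Btop J \<gamma> (4*k'+6) (prodst (2*Z+1) (gfac J \<gamma> T (k'+1)))"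
          proof -
            have ee: "4*(k'+1)+2 = 4*k'+6" by simp
            show ?thesis by (subst Phi_2[OF k'(2)], subst ee, rule refl)
          qed
          finally show ?thesis .
        qed
        have f: "q + 1 = 4*k'+5" using e by simp
        show ?thesis by (subst a, subst b, subst f, subst e(3), rule refl)
      qed
      also have "\<dots> = 0" using lnk[OF k'(2) g] .
      also have "0 = lam * Phi Z J \<gamma> T q S" using 1 by (simp add: Phi_zero)
      finally show ?thesis .
    qed
  next
    case (2 k)
    have "\<Psi> (q-1) = (\<lambda>_. 0)" "\<Psi> (q+1) = (\<lambda>_. 0)" using 2 z0 z2 by simp_all
    then show ?thesis using 2 by (simp add: hop_zero_nb Phi_zero)
  next
    case (3 k)
    show ?thesis
    proof (cases "k \<le> Z")
      case False
      then have nc: "(1 \<le> q \<and> q \<le> 4*Z+3) = False" using 3 by auto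
      have "hopP (4*Z+3) J \<gamma> \<Psi> q S = 0" by (simp only: hopP_def nc if_False)
      moreover have "Phi Z J \<gamma> T q S = 0" unfolding 3 using Phi_big[of Z k J \<gamma> T] False by simp
      ultimately show ?thesis by simp
    next
      case True
      have c: "1 \<le> q" "q \<le> 4*Z+3" "2 \<le> q" "q+1 \<le> 4*Z+3" using 3 True by simp_all
      have e: "q - 1 = 4*k+1" "q + 1 = 4*k+3" using 3 by simp_all
      have "hopP (4*Z+3) J \<gamma> \<Psi> q S = Bop J \<gamma> q (\<Psi> (q-1)) S + Btop J \<gamma> (q+1) (\<Psi> (q+1)) S"
        unfolding hopP_def using c by simp
      also have "\<dots> = Bop J \<gamma> (4*k+2) (Btop J \<gamma> (4*k+2) (prodst (2*Z+1) (gfac J \<gamma> T k))) S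
       + Btop J \<gamma> (4*k+3) (Bop J \<gamma> (4*k+3) (prodst (2*Z+1) (gfac J \<gamma> T k))) S"
        apply (simp only: e)
        apply (simp only: h1[OF True] h3[OF True])
        apply (simp only: Phi_2[OF True])
        apply (subst 3, rule refl)
        done
      also have "\<dots> = lam * prodst (2*Z+1) (gfac J \<gamma> T k) S"
        unfolding lam_def by (rule blk[OF True])
      also have "\<dots> = lam * Phi Z J \<gamma> T q S" unfolding 3 Phi_2[OF True] ..
      finally show ?thesis .
    qed
  next
    case (4 k)
    have e: "q - 1 = 4*k+2" "q + 1 = 4*(k+1)" using 4 by simp_all
    have "\<Psi> (q-1) = (\<lambda>_. 0)" unfolding e(1) by (rule z2)
    moreover have "\<Psi> (q+1) = (\<lambda>_. 0)" unfolding e(2) by (rule z0)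
    ultimately show ?thesis using 4 by (simp add: hop_zero_nb Phi_zero)
  qed
  then show ?thesis unfolding \<Psi>_def lam_def .
qed



lemma st_smult: "st (\<lambda>q S. c * \<Phi> q S) = (\<lambda>b. c * st \<Phi> b)"
  by (auto simp: st_def fun_eq_iff)

lemma eigen: assumes g: "\<gamma> \<noteq> 0"
  shows "Ham (4*Z+3) J \<gamma> (Ham (4*Z+3) J \<gamma> (st (Phi Z J \<gamma> T)))
     = (\<lambda>b. complex_of_real (2 * \<gamma>^2 + J^2) * st (Phi Z J \<gamma> T) b)"
proof -
  have "Ham (4*Z+3) J \<gamma> (Ham (4*Z+3) J \<gamma> (st (Phi Z J \<gamma> T)))
      = st (hopP (4*Z+3) J \<gamma> (hopP (4*Z+3) J \<gamma> (Phi Z J \<gamma> T)))"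
    by (simp add: Ham_st okPhi okP_hop)
  also have "hopP (4*Z+3) J \<gamma> (hopP (4*Z+3) J \<gamma> (Phi Z J \<gamma> T))
      = (\<lambda>q S. complex_of_real (2 * \<gamma>^2 + J^2) * Phi Z J \<gamma> T q S)"
    using hop2[OF g] by (intro ext) simp
  finally show ?thesis by (simp add: st_smult)
qed

lemma Ham1: "Ham (4*Z+3) J \<gamma> (st (Phi Z J \<gamma> T)) = st (hopP (4*Z+3) J \<gamma> (Phi Z J \<gamma> T))"
  by (simp add: Ham_st okPhi)

lemma in_sector: "st (Phi Z J \<gamma> T) \<in> sector (4*Z+3)"
  unfolding sector_def
proof (intro CollectI allI impI)
  fix F S assume nz: "st (Phi Z J \<gamma> T) (F, S) \<noteq> 0"
  then obtain q where F: "F = {q}" by (auto simp: st_def split: if_splits)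
  then have nz': "Phi Z J \<gamma> T q S \<noteq> 0" using nz by simp
  then have "1 \<le> q \<and> q \<le> 4*Z+3 \<and> S \<subseteq> {1..4*Z+3}" using okPhi unfolding okP_def by blast
  moreover have "1 \<in> S"
  proof (rule ccontr)
    assume "1 \<notin> S"
    then have "Phi Z J \<gamma> T q S = 0" by (simp add: Phi_def prodst_def)
    then show False using nz' by simp
  qed
  ultimately show "(F, S) \<in> configs (4*Z+3) \<and> card F = 1 \<and> 1 \<in> S"
    using F by (auto simp: configs_def)
qed

lemma lin_indep_witness:
  assumes "\<And>v. v \<in> A \<Longrightarrow> \<exists>b. v b \<noteq> 0 \<and> (\<forall>w\<in>A. w \<noteq> v \<longrightarrow> w b = 0)"
  shows "lin_indep A"
  unfolding lin_indep_def
proof (intro allI impI ballI)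
  fix B c v
  assume h: "finite B \<and> B \<subseteq> A \<and> (\<lambda>b. \<Sum>v\<in>B. c v * v b) = (\<lambda>_. 0)" and v: "v \<in> B"
  then obtain b where b: "v b \<noteq> 0" "\<forall>w\<in>A. w \<noteq> v \<longrightarrow> w b = 0" using assms by blast
  have "(\<Sum>w\<in>B. c w * w b) = c v * v b + (\<Sum>w\<in>B-{v}. c w * w b)"
    using h v by (simp add: sum.remove)
  also have "(\<Sum>w\<in>B-{v}. c w * w b) = 0"
    using b h by (intro sum.neutral) auto
  finally have "c v * v b = (\<Sum>w\<in>B. c w * w b)" by simp
  also have "\<dots> = 0" using h by (metis (no_types))
  finally show "c v = 0" using b by simp
qed

lemma sum_two_forms:
  fixes u w :: state and c :: "state \<Rightarrow> complex" and B :: "state set"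
  assumes "finite B" "\<forall>v\<in>B. \<exists>a. v = (\<lambda>b. a * u b) \<or> v = (\<lambda>b. a * w b)"
  shows "\<exists>\<alpha> \<beta>. \<forall>b. (\<Sum>v\<in>B. c v * v b) = \<alpha> * u b + \<beta> * w b"
  using assms
proof (induction B rule: finite_induct)
  case empty
  then show ?case by (intro exI[of _ 0]) simp
next
  case (insert x B)
  then obtain \<alpha> \<beta> where ab: "\<forall>b. (\<Sum>v\<in>B. c v * v b) = \<alpha> * u b + \<beta> * w b" by auto
  obtain a where a: "x = (\<lambda>b. a * u b) \<or> x = (\<lambda>b. a * w b)" using insert by auto
  then show ?case
  proof
    assume x: "x = (\<lambda>b. a * u b)"
    show ?thesis using insert ab x
      by (intro exI[of _ "\<alpha> + c x * a"] exI[of _ \<beta>]) (simp add: algebra_simps)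
  next
    assume x: "x = (\<lambda>b. a * w b)"
    show ?thesis using insert ab x
      by (intro exI[of _ \<alpha>] exI[of _ "\<beta> + c x * a"]) (simp add: algebra_simps)
  qed
qed

lemma krylov_two:
  fixes H :: "state \<Rightarrow> state"
  assumes hom: "\<And>c v. H (\<lambda>b. c * v b) = (\<lambda>b. c * H v b)"
    and sq: "H (H \<psi>) = (\<lambda>b. l * \<psi> b)" and ne: "\<psi> \<noteq> H \<psi>"
  shows "krylov H \<psi> = cspan {\<psi>, H \<psi>}"
proof -
  have forms: "\<exists>a. (H ^^ n) \<psi> = (\<lambda>b. a * \<psi> b) \<or> (H ^^ n) \<psi> = (\<lambda>b. a * H \<psi> b)" for n
  proof (induction n)
    case 0
    show ?case by (intro exI[of _ 1]) simp
  next
    case (Suc n)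
    then obtain a where a: "(H ^^ n) \<psi> = (\<lambda>b. a * \<psi> b) \<or> (H ^^ n) \<psi> = (\<lambda>b. a * H \<psi> b)" by blast
    then show ?case
    proof
      assume "(H ^^ n) \<psi> = (\<lambda>b. a * \<psi> b)"
      then have "(H ^^ Suc n) \<psi> = (\<lambda>b. a * H \<psi> b)" by (simp add: hom)
      then show ?thesis by blast
    next
      assume "(H ^^ n) \<psi> = (\<lambda>b. a * H \<psi> b)"
      then have "(H ^^ Suc n) \<psi> = (\<lambda>b. (a * l) * \<psi> b)" by (simp add: hom sq algebra_simps)
      then show ?thesis by blast
    qed
  qed
  show ?thesis
  proof
    show "krylov H \<psi> \<subseteq> cspan {\<psi>, H \<psi>}"
    proof
      fix \<phi> assume "\<phi> \<in> krylov H \<psi>"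
      then obtain B c where B: "finite B" "B \<subseteq> range (\<lambda>n. (H ^^ n) \<psi>)" "\<phi> = (\<lambda>b. \<Sum>v\<in>B. c v * v b)"
        unfolding krylov_def cspan_def by blast
      have "\<forall>v\<in>B. \<exists>a. v = (\<lambda>b. a * \<psi> b) \<or> v = (\<lambda>b. a * H \<psi> b)" using B(2) forms by blast
      then obtain \<alpha> \<beta> where ab: "\<forall>b. (\<Sum>v\<in>B. c v * v b) = \<alpha> * \<psi> b + \<beta> * H \<psi> b"
        using sum_two_forms[OF B(1)] by blast
      define c' where "c' x = (if x = \<psi> then \<alpha> else \<beta>)" for x :: state
      have e: "\<phi> = (\<lambda>b. \<Sum>x\<in>{\<psi>, H \<psi>}. c' x * x b)"
        using ab ne by (auto simp: B(3) c'_def fun_eq_iff)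
      show "\<phi> \<in> cspan {\<psi>, H \<psi>}" unfolding cspan_def
        by (rule CollectI, rule exI[of _ "{\<psi>, H \<psi>}"], rule exI[of _ c']) (simp add: e)
    qed
  next
    have sub: "{\<psi>, H \<psi>} \<subseteq> range (\<lambda>n. (H ^^ n) \<psi>)"
      using rangeI[of "\<lambda>n. (H ^^ n) \<psi>" 0] rangeI[of "\<lambda>n. (H ^^ n) \<psi>" 1] by auto
    show "cspan {\<psi>, H \<psi>} \<subseteq> krylov H \<psi>"
    proof
      fix \<phi> assume "\<phi> \<in> cspan {\<psi>, H \<psi>}"
      then obtain B c where B: "finite B" "B \<subseteq> {\<psi>, H \<psi>}" "\<phi> = (\<lambda>b. \<Sum>v\<in>B. c v * v b)"
        unfolding cspan_def by blast
      have "B \<subseteq> range (\<lambda>n. (H ^^ n) \<psi>)" using B(2) sub by (rule order_trans)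
      then show "\<phi> \<in> krylov H \<psi>" unfolding krylov_def cspan_def
        by (rule_tac CollectI, rule_tac exI[of _ B], rule_tac exI[of _ c]) (simp add: B)
    qed
  qed
qed



definition wx :: "nat set \<Rightarrow> nat \<Rightarrow> bool" where
  "wx T i = (if even i then (i = 0 \<longrightarrow> 2 \<in> T) else 4*((i+1) div 2) \<in> T)"
definition wy :: "nat set \<Rightarrow> nat \<Rightarrow> bool" where
  "wy T i = (if even i then (i = 0 \<or> 4*(i div 2)+2 \<in> T) else 4*((i+1) div 2)+1 \<in> T)"
definition Wset :: "nat \<Rightarrow> nat set \<Rightarrow> nat set" where
  "Wset Z T = insert 1 ({2*i+2 | i. i < 2*Z+1 \<and> wx T i} \<union> {2*i+3 | i. i < 2*Z+1 \<and> wy T i})"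
definition agr :: "nat set \<Rightarrow> nat set \<Rightarrow> nat \<Rightarrow> bool" where
  "agr T T' i = (if even i then (4*(i div 2)+2 \<in> T \<longleftrightarrow> 4*(i div 2)+2 \<in> T')
     else ((4*((i+1) div 2) \<in> T \<longleftrightarrow> 4*((i+1) div 2) \<in> T') \<and> (4*((i+1) div 2)+1 \<in> T \<longleftrightarrow> 4*((i+1) div 2)+1 \<in> T')))"
definition Qs :: "nat \<Rightarrow> nat set" where
  "Qs Z = (\<lambda>j. 4*j+2) ` {..Z} \<union> (\<lambda>j. 4*j+4) ` {..<Z} \<union> (\<lambda>j. 4*j+5) ` {..<Z}"

lemma par_ne: "2*(i::nat)+2 \<noteq> 2*i'+3" "2*(i::nat)+3 \<noteq> 2*i'+2" "2*(i::nat)+2 \<noteq> 1" "2*(i::nat)+3 \<noteq> 1"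
  by presburger+

lemma W_bits: assumes "i < 2*Z+1"
  shows "(2*i+2 \<in> Wset Z T) = wx T i" "(2*i+3 \<in> Wset Z T) = wy T i"
  using assms par_ne unfolding Wset_def by auto

lemma W_guard: "1 \<in> Wset Z T \<and> Wset Z T \<subseteq> {1..2*(2*Z+1)+1}"
  unfolding Wset_def by auto

lemma fac_nz: assumes g: "\<gamma> \<noteq> 0"
  shows "(gfac J \<gamma> T' 0 i (wx T i) (wy T i) \<noteq> 0) = agr T T' i"
proof (cases "even i")
  case True
  then obtain j where j: "i = 2*j" by blast
  show ?thesis
  proof (cases "j = 0")
    case True
    then show ?thesis using j g by (auto simp: gfac_def beta_def v1_def v2_def wx_def wy_def agr_def numeral_2_eq_2)
  next
    case False
    then show ?thesis using j g by (auto simp: gfac_def beta_def v1_def v2_def fbt1_def wx_def wy_def agr_def)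
  qed
next
  case False
  then obtain j where j: "i = 2*j+1" using oddE by blast
  then show ?thesis using False by (auto simp: gfac_def fR_def wx_def wy_def agr_def)
qed

lemma wit_nz: assumes g: "\<gamma> \<noteq> 0"
  shows "(st (Phi Z J \<gamma> T') ({2}, Wset Z T) \<noteq> 0) = (\<forall>i<2*Z+1. agr T T' i)"
proof -
  have P: "Phi Z J \<gamma> T' 2 = prodst (2*Z+1) (gfac J \<gamma> T' 0)" by (simp add: Phi_def)
  have e1: "st (Phi Z J \<gamma> T') ({2}, Wset Z T) = (\<Prod>i<2*Z+1. gfac J \<gamma> T' 0 i (wx T i) (wy T i))"
    unfolding st_single P prodst_def using W_guard[of Z T] W_bits[of _ Z T]
    by (simp del: One_nat_def)
  have e2: "((\<Prod>i<2*Z+1. gfac J \<gamma> T' 0 i (wx T i) (wy T i)) = 0) = (\<exists>i. i < 2*Z+1 \<and> gfac J \<gamma> T' 0 i (wx T i) (wy T i) = 0)"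
    using prod_zero_iff[where A="{..<2*Z+1}" and f="\<lambda>i. gfac J \<gamma> T' 0 i (wx T i) (wy T i)"]
    by (simp only: finite_lessThan simp_thms Bex_def lessThan_iff)
  have e3: "(gfac J \<gamma> T' 0 i (wx T i) (wy T i) \<noteq> 0) = agr T T' i" for i using fac_nz[OF g] .
  have "(st (Phi Z J \<gamma> T') ({2}, Wset Z T) \<noteq> 0) = (\<not> (\<exists>i. i < 2*Z+1 \<and> gfac J \<gamma> T' 0 i (wx T i) (wy T i) = 0))"
    by (simp only: e1 e2)
  also have "\<dots> = (\<forall>i<2*Z+1. agr T T' i)" by (simp only: e3[symmetric]) blast
  finally show ?thesis .
qed

lemma agr_refl: "agr T T i" by (simp add: agr_def)

lemma agr_eq: assumes "T \<subseteq> Qs Z" "T' \<subseteq> Qs Z" "\<forall>i<2*Z+1. agr T T' i"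
  shows "T = T'"
proof -
  have "p \<in> T \<longleftrightarrow> p \<in> T'" if p: "p \<in> Qs Z" for p
  proof -
    consider j where "j \<le> Z" "p = 4*j+2" | j where "j < Z" "p = 4*j+4" | j where "j < Z" "p = 4*j+5"
      using p unfolding Qs_def by blast
    then show ?thesis
    proof cases
      case 1
      then have "agr T T' (2*j)" using assms(3) by simp
      then show ?thesis using 1 by (simp add: agr_def)
    next
      case 2
      then have a: "agr T T' (2*j+1)" using assms(3) by simp
      have "(2*j+1+1) div 2 = j+1" by simp
      then show ?thesis using a 2 by (simp add: agr_def algebra_simps)
    next
      case 3
      then have a: "agr T T' (2*j+1)" using assms(3) by simp
      have "(2*j+1+1) div 2 = j+1" by simp
      then show ?thesis using a 3 by (simp add: agr_def algebra_simps)
    qed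
  qed
  then show ?thesis using assms(1,2) by blast
qed

lemma card_Qs: "card (Qs Z) = 3*Z+1"
proof -
  let ?A = "(\<lambda>j. 4*j+2) ` {..Z}" and ?B = "(\<lambda>j. 4*j+4) ` {..<Z}" and ?C = "(\<lambda>j::nat. 4*j+5) ` {..<Z}"
  have cA: "card ?A = Z+1" by (subst card_image) (auto simp: inj_on_def)
  have cB: "card ?B = Z" by (subst card_image) (auto simp: inj_on_def)
  have cC: "card ?C = Z" by (subst card_image) (auto simp: inj_on_def)
  have mA: "x mod 4 = 2" if xin: "x \<in> ?A" for x
  proof -
    obtain j where "x = 4*j+2" using xin by blast
    then show ?thesis by presburger
  qed
  have mB: "x mod 4 = 0" if xin: "x \<in> ?B" for x
  proof -
    obtain j where "x = 4*j+4" using xin by blast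
    then show ?thesis by presburger
  qed
  have mC: "x mod 4 = 1" if xin: "x \<in> ?C" for x
  proof -
    obtain j where "x = 4*j+5" using xin by blast
    then show ?thesis by presburger
  qed
  have d1: "?A \<inter> ?B = {}"
  proof -
    have "False" if xA: "x \<in> ?A" and xB: "x \<in> ?B" for x
      using mA[OF xA] mB[OF xB] by simp
    then show ?thesis by blast
  qed
  have d2: "(?A \<union> ?B) \<inter> ?C = {}"
  proof -
    have "False" if xA: "x \<in> ?A" and xC: "x \<in> ?C" for x
      using mA[OF xA] mC[OF xC] by simp
    moreover have "False" if xB: "x \<in> ?B" and xC: "x \<in> ?C" for x
      using mB[OF xB] mC[OF xC] by simp
    ultimately show ?thesis by blast
  qed
  have "card (?A \<union> ?B \<union> ?C) = card (?A \<union> ?B) + card ?C" by (rule card_Un_disjoint) (use d2 in auto)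
  also have "card (?A \<union> ?B) = card ?A + card ?B" by (rule card_Un_disjoint) (use d1 in auto)
  finally show ?thesis unfolding Qs_def using cA cB cC by simp
qed

lemma finite_Qs: "finite (Qs Z)" unfolding Qs_def by simp



lemma hop_even_zero: "q mod 4 = 2 \<Longrightarrow> hopP (4*Z+3) J \<gamma> (Phi Z J \<gamma> T) q = (\<lambda>_. 0)"
proof -
  assume q: "q mod 4 = 2"
  have d: "q = 4*(q div 4) + q mod 4" by simp
  have "q = 4*(q div 4) + 2" using d by (simp only: q)
  then show ?thesis using hop1_2[of Z J \<gamma> T "q div 4"] by metis
qed

lemma Ham_zero: "Ham M J \<gamma> (\<lambda>_. 0) = (\<lambda>_. 0)"
  using Ham_smult[of M J \<gamma> 0 "\<lambda>_. 0"] by simp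

lemma lam_nz: assumes "\<gamma> \<noteq> 0" shows "complex_of_real (2 * \<gamma>^2 + J^2) \<noteq> 0"
proof -
  have "\<gamma>^2 > 0" using assms by simp
  moreover have "J^2 \<ge> 0" by simp
  ultimately have "2 * \<gamma>^2 + J^2 \<noteq> 0" by linarith
  then show ?thesis by (simp only: of_real_eq_0_iff not_False_eq_True)
qed

lemma single_props:
  fixes J \<gamma> :: real and Z :: nat and T :: "nat set"
  assumes g: "\<gamma> \<noteq> 0" and T: "T \<subseteq> Qs Z"
  defines "\<psi> \<equiv> st (Phi Z J \<gamma> T)"
  shows "Ham (4*Z+3) J \<gamma> (Ham (4*Z+3) J \<gamma> \<psi>) = (\<lambda>b. complex_of_real (2 * \<gamma>^2 + J^2) * \<psi> b)
       \<and> card {\<psi>, Ham (4*Z+3) J \<gamma> \<psi>} = 2 \<and> lin_indep {\<psi>, Ham (4*Z+3) J \<gamma> \<psi>}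
       \<and> krylov (Ham (4*Z+3) J \<gamma>) \<psi> = cspan {\<psi>, Ham (4*Z+3) J \<gamma> \<psi>}"
proof -
  let ?H = "Ham (4*Z+3) J \<gamma>"
  let ?l = "complex_of_real (2 * \<gamma>^2 + J^2)"
  have eig: "?H (?H \<psi>) = (\<lambda>b. ?l * \<psi> b)" unfolding \<psi>_def by (rule eigen[OF g])
  have H1: "?H \<psi> = st (hopP (4*Z+3) J \<gamma> (Phi Z J \<gamma> T))" unfolding \<psi>_def by (rule Ham1)
  define b0 where "b0 = ({2::nat}, Wset Z T)"
  have p0: "\<psi> b0 \<noteq> 0" unfolding \<psi>_def b0_def using wit_nz[OF g, of Z J T T] agr_refl by blast
  have h0: "?H \<psi> b0 = 0" unfolding H1 b0_def using hop_even_zero[of 2 Z J \<gamma> T] by simp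
  have ne: "\<psi> \<noteq> ?H \<psi>" using p0 h0 by auto
  have Hnz: "?H \<psi> \<noteq> (\<lambda>_. 0)"
  proof
    assume "?H \<psi> = (\<lambda>_. 0)"
    then have "?H (?H \<psi>) = (\<lambda>_. 0)" by (simp add: Ham_zero)
    then have "?l * \<psi> b0 = 0" using eig by (metis (mono_tags))
    then show False using p0 lam_nz[OF g, of J] by simp
  qed
  then obtain b1 where b1: "?H \<psi> b1 \<noteq> 0" by (meson ext)
  obtain F S where FS: "b1 = (F, S)" by (cases b1)
  have "\<exists>q. F = {q}"
  proof (rule ccontr)
    assume "\<not> (\<exists>q. F = {q})"
    then have "?H \<psi> b1 = 0" unfolding H1 FS by (rule st_nonsingle)
    then show False using b1 by simp
  qed
  then obtain q where q: "F = {q}" by blast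
  have hq: "hopP (4*Z+3) J \<gamma> (Phi Z J \<gamma> T) q S \<noteq> 0" using b1 unfolding H1 FS q by simp
  have "q mod 4 \<noteq> 2" using hq hop_even_zero[of q Z J \<gamma> T] by auto
  then have p1: "\<psi> b1 = 0" unfolding \<psi>_def FS q by (simp add: Phi_zero)
  have card2: "card {\<psi>, ?H \<psi>} = 2" using ne by simp
  have li: "lin_indep {\<psi>, ?H \<psi>}"
  proof (rule lin_indep_witness)
    fix v assume "v \<in> {\<psi>, ?H \<psi>}"
    then show "\<exists>b. v b \<noteq> 0 \<and> (\<forall>w\<in>{\<psi>, ?H \<psi>}. w \<noteq> v \<longrightarrow> w b = 0)"
    proof
      assume v: "v = \<psi>"
      show ?thesis using p0 h0 v by (intro exI[of _ b0]) auto
    next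
      assume "v \<in> {?H \<psi>}"
      then have v: "v = ?H \<psi>" by simp
      show ?thesis using p1 b1 v by (intro exI[of _ b1]) auto
    qed
  qed
  have kr: "krylov ?H \<psi> = cspan {\<psi>, ?H \<psi>}"
    by (rule krylov_two[OF _ eig ne]) (rule Ham_smult)
  show ?thesis using eig card2 li kr by blast
qed

theorem mainTheorem3:
  fixes Z :: nat and J \<gamma> :: real
  assumes "Z \<ge> 1" and "\<gamma> \<noteq> 0"
  defines "M \<equiv> 4 * Z + 3"
  shows "\<exists>A. finite A \<and> card A \<ge> 2 ^ (3 * Z + 1) \<and> A \<subseteq> sector M \<and> lin_indep A \<and>
    (\<forall>\<psi>\<in>A. Ham M J \<gamma> (Ham M J \<gamma> \<psi>) = (\<lambda>b. complex_of_real (2 * \<gamma>^2 + J^2) * \<psi> b)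
       \<and> card {\<psi>, Ham M J \<gamma> \<psi>} = 2 \<and> lin_indep {\<psi>, Ham M J \<gamma> \<psi>}
       \<and> krylov (Ham M J \<gamma>) \<psi> = cspan {\<psi>, Ham M J \<gamma> \<psi>})"
proof -
  note g = assms(2)
  let ?f = "\<lambda>T. st (Phi Z J \<gamma> T)"
  define A where "A = ?f ` Pow (Qs Z)"
  define b where "b T = ({2::nat}, Wset Z T)" for T
  have wit: "(?f T' (b T) \<noteq> 0) = (T' = T)" if "T \<subseteq> Qs Z" "T' \<subseteq> Qs Z" for T T'
  proof
    assume "?f T' (b T) \<noteq> 0"
    then have "\<forall>i<2*Z+1. agr T T' i" unfolding b_def using wit_nz[OF g] by blast
    then show "T' = T" using agr_eq[OF that] by simp
  next
    assume "T' = T"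
    then show "?f T' (b T) \<noteq> 0" unfolding b_def using wit_nz[OF g, of Z J T T] agr_refl by blast
  qed
  have inj: "inj_on ?f (Pow (Qs Z))"
  proof (rule inj_onI)
    fix T T' assume T: "T \<in> Pow (Qs Z)" and T': "T' \<in> Pow (Qs Z)" and e: "?f T = ?f T'"
    have "?f T (b T) \<noteq> 0" using wit[of T T] T by simp
    then have "?f T' (b T) \<noteq> 0" using e by simp
    then show "T = T'" using wit[of T T'] T T' by simp
  qed
  have fin: "finite A" unfolding A_def using finite_Qs by simp
  have card: "card A = 2 ^ (3 * Z + 1)"
    unfolding A_def using card_image[OF inj] card_Pow[of "Qs Z"] card_Qs[of Z] finite_Qs[of Z] by simp
  have sec: "A \<subseteq> sector M" unfolding A_def M_def using in_sector by blast
  have li: "lin_indep A"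
  proof (rule lin_indep_witness)
    fix v assume "v \<in> A"
    then obtain T where T: "T \<subseteq> Qs Z" and v: "v = ?f T" unfolding A_def by blast
    show "\<exists>bb. v bb \<noteq> 0 \<and> (\<forall>w\<in>A. w \<noteq> v \<longrightarrow> w bb = 0)"
    proof (intro exI[of _ "b T"] conjI ballI impI)
      show "v (b T) \<noteq> 0" using wit[OF T T] v by simp
    next
      fix w assume "w \<in> A" "w \<noteq> v"
      then obtain T' where T': "T' \<subseteq> Qs Z" and w: "w = ?f T'" unfolding A_def by blast
      then have "T' \<noteq> T" using \<open>w \<noteq> v\<close> v by blast
      then show "w (b T) = 0" using wit[OF T T'] w by simp
    qed
  qed
  have props: "\<forall>\<psi>\<in>A. Ham M J \<gamma> (Ham M J \<gamma> \<psi>) = (\<lambda>b. complex_of_real (2 * \<gamma>^2 + J^2) * \<psi> b)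
       \<and> card {\<psi>, Ham M J \<gamma> \<psi>} = 2 \<and> lin_indep {\<psi>, Ham M J \<gamma> \<psi>}
       \<and> krylov (Ham M J \<gamma>) \<psi> = cspan {\<psi>, Ham M J \<gamma> \<psi>}"
  proof
    fix \<psi> assume "\<psi> \<in> A"
    then obtain T where T: "T \<subseteq> Qs Z" and v: "\<psi> = ?f T" unfolding A_def by blast
    show "Ham M J \<gamma> (Ham M J \<gamma> \<psi>) = (\<lambda>b. complex_of_real (2 * \<gamma>^2 + J^2) * \<psi> b)
       \<and> card {\<psi>, Ham M J \<gamma> \<psi>} = 2 \<and> lin_indep {\<psi>, Ham M J \<gamma> \<psi>}
       \<and> krylov (Ham M J \<gamma>) \<psi> = cspan {\<psi>, Ham M J \<gamma> \<psi>}"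
      unfolding M_def v by (rule single_props[OF g T])
  qed
  show ?thesis using fin card sec li props by (intro exI[of _ A]) simp
qed


end
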